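(* Let $T\in\mathbb{N}$, and let $X=\{X_t\}_{t=0}^{T}$ be a state process valued in $\mathcal{X}\subseteq\mathbb{R}^d$ with initial state $X_0\in\mathring{\mathcal{X}}_R$, evolving as $X_{t+1}=H\big(K(X_t,a_t),\varepsilon_{t+1}\big)$ for $t=0,\dots,T-1$, where $\{a_t\}_{t=0}^{T-1}$ is an arbitrary $\{\mathcal{F}_t\}$-adapted $\mathbb{R}^p$-valued process. Let the auxiliary process $X^R$ be defined by $X_0^R=X_0$ and $$X_t^R=X_t\,\mathbb{I}_{\{\tau^R>t\}}+\mathcal{Q}\big(X_{\tau^R\wedge t}\big)\,\mathbb{I}_{\{\tau^R\le t\}},\qquad t=1,\dots,T.$$ Then $X^R$ satisfies, for $t=0,1,\dots,T-1$, $$X_{t+1}^R=X_t^R\,\mathbb{I}_{\{X_t^R\in\partial\mathcal{X}_R\}}+\tilde H\big(K(X_t^R,a_t),\varepsilon_{t+1}\big)\,\mathbb{I}_{\{X_t^R\in\mathring{\mathcal{X}}_R\}},$$ where $\tilde H(k,e)=\mathcal{Q}(H(k,e))$ if $H(k,e)\notin\mathring{\mathcal{X}}_R$ and $\tilde H(k,e)=H(k,e)$ otherwise.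
   Context: Time points are $\mathcal{T}=\{0,1,\dots,T\}$ on a probability space $(\Omega,\mathcal{F},\mathbb{P})$ with filtration $\{\mathcal{F}_t\}_{t\in\mathcal{T}}$. $\varepsilon_1,\dots,\varepsilon_T$ are independent $\mathbb{R}^q$-valued random variables ($\varepsilon_{t+1}$ being $\mathcal{F}_{t+1}$-measurable), $K:\mathbb{R}^{d+p}\to\mathbb{R}^r$ and $H:\mathbb{R}^{r+q}\to\mathbb{R}^d$ are measurable. $\mathcal{X}_R\subseteq\mathcal{X}$ is a bounded set (depending on a truncation parameter $R$) with interior $\mathring{\mathcal{X}}_R$ and boundary $\partial\mathcal{X}_R$, whose closure $\mathrm{cl}(\mathcal{X}_R)$ is compact and strictly convex. $\mathcal{Q}(x)=\arg\inf_{y\in\mathrm{cl}(\mathcal{X}_R)}\|y-x\|$ is the Euclidean nearest-point projection onto $\mathrm{cl}(\mathcal{X}_R)$ (unique, and lying in $\partial\mathcal{X}_R$ when $x\notin\mathring{\mathcal{X}}_R$). The stopping time is $\tau^R=\inf\{t\in\mathcal{T}: X_t\notin\mathring{\mathcal{X}}_R\}$, with $\tau^R=\infty$ if $X_t\in\mathring{\mathcal{X}}_R$ for all $t\in\mathcal{T}$. *)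

theory Defs
  imports "HOL-Analysis.Analysis" "HOL-Probability.Probability" "HOL-Library.Extended_Nat"
begin

definition strictly_convex_set :: "'a::real_normed_vector set \<Rightarrow> bool" where
  "strictly_convex_set S \<longleftrightarrow> convex S \<and>
     (\<forall>x\<in>S. \<forall>y\<in>S. x \<noteq> y \<longrightarrow> open_segment x y \<subseteq> interior S)"

text \<open>Euclidean nearest-point projection onto the closure of XR
  (arg inf of the distance; unique under the standing assumptions).\<close>
definition proj :: "'a::euclidean_space set \<Rightarrow> 'a \<Rightarrow> 'a" where
  "proj XR x = (THE y. y \<in> closure XR \<and> (\<forall>z\<in>closure XR. norm (y - x) \<le> norm (z - x)))"

definition tauR :: "nat \<Rightarrow> 'a::euclidean_space set \<Rightarrow> (nat \<Rightarrow> 'w \<Rightarrow> 'a) \<Rightarrow> 'w \<Rightarrow> enat" where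
  "tauR T XR X \<omega> =
     (if \<exists>t\<le>T. X t \<omega> \<notin> interior XR
      then enat (LEAST t. t \<le> T \<and> X t \<omega> \<notin> interior XR) else \<infinity>)"

definition XRproc :: "nat \<Rightarrow> 'a::euclidean_space set \<Rightarrow> (nat \<Rightarrow> 'w \<Rightarrow> 'a) \<Rightarrow> nat \<Rightarrow> 'w \<Rightarrow> 'a" where
  "XRproc T XR X t \<omega> =
     (if t = 0 then X 0 \<omega>
      else indicator {\<omega>'. tauR T XR X \<omega>' > enat t} \<omega> *\<^sub>R X t \<omega>
         + indicator {\<omega>'. tauR T XR X \<omega>' \<le> enat t} \<omega> *\<^sub>R
             proj XR (X (the_enat (min (tauR T XR X \<omega>) (enat t))) \<omega>))"

definition Htilde :: "'a::euclidean_space set \<Rightarrow> ('r \<times> 'q \<Rightarrow> 'a) \<Rightarrow> 'r \<Rightarrow> 'q \<Rightarrow> 'a" where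
  "Htilde XR H k e = (if H (k, e) \<notin> interior XR then proj XR (H (k, e)) else H (k, e))"

end

theory Submission
  imports Defs
begin

lemma proj_eq:
  fixes XR :: "'d::euclidean_space set"
  assumes "convex (closure XR)" "closure XR \<noteq> {}"
  shows "proj XR x = closest_point (closure XR) x"
  unfolding proj_def
proof (rule the_equality)
  show "closest_point (closure XR) x \<in> closure XR \<and>
    (\<forall>z\<in>closure XR. norm (closest_point (closure XR) x - x) \<le> norm (z - x))"
    using closest_point_exists[of "closure XR" x] assms
    by (simp add: dist_norm norm_minus_commute)
next
  fix y assume "y \<in> closure XR \<and> (\<forall>z\<in>closure XR. norm (y - x) \<le> norm (z - x))"
  then show "y = closest_point (closure XR) x"
    using closest_point_unique[of "closure XR" y x] assms
    by (simp add: dist_norm norm_minus_commute)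
qed

lemma proj_frontier:
  fixes XR :: "'d::euclidean_space set"
  assumes "convex (closure XR)" "interior XR \<noteq> {}" "x \<notin> interior XR"
  shows "proj XR x \<in> frontier XR"
proof -
  have ne: "closure XR \<noteq> {}" using assms(2) interior_subset closure_subset by blast
  have ii: "interior XR \<subseteq> interior (closure XR)" by (simp add: interior_mono closure_subset)
  then have ine: "interior (closure XR) \<noteq> {}" using assms(2) by blast
  have pe: "proj XR x = closest_point (closure XR) x" using proj_eq assms(1) ne by blast
  show ?thesis
  proof (cases "x \<in> closure XR")
    case True
    then have "closest_point (closure XR) x = x" by (simp add: closest_point_self)
    then show ?thesis using pe True assms(3) by (simp add: frontier_def)
  next
    case False
    then have "x \<notin> rel_interior (closure XR)"
      using rel_interior_subset by blast
    then have "closest_point (closure XR) x \<notin> rel_interior (closure XR)"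
      using closest_point_in_rel_interior[of "closure XR" x] ne affine_hull_nonempty_interior[OF ine]
      by simp
    then have "closest_point (closure XR) x \<notin> interior (closure XR)"
      using rel_interior_nonempty_interior[OF ine] by simp
    then have "closest_point (closure XR) x \<notin> interior XR" using ii by blast
    moreover have "closest_point (closure XR) x \<in> closure XR"
      using closest_point_in_set ne by blast
    ultimately show ?thesis using pe by (simp add: frontier_def)
  qed
qed

theorem proposition1:
  fixes M :: "'w measure" and F :: "nat \<Rightarrow> 'w measure" and T :: nat
    and X :: "nat \<Rightarrow> 'w \<Rightarrow> 'd::euclidean_space"
    and a :: "nat \<Rightarrow> 'w \<Rightarrow> 'p::euclidean_space"
    and eps :: "nat \<Rightarrow> 'w \<Rightarrow> 'q::euclidean_space"
    and K :: "'d \<times> 'p \<Rightarrow> 'r::euclidean_space"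
    and H :: "'r \<times> 'q \<Rightarrow> 'd"
    and \<X> XR :: "'d set"
  assumes prob: "prob_space M"
    and filt: "filtration (space M) F"
    and filt_sub: "\<And>t. sets (F t) \<subseteq> sets M"
    and eps_meas: "\<And>t. t < T \<Longrightarrow> eps (Suc t) \<in> borel_measurable (F (Suc t))"
    and eps_indep: "prob_space.indep_vars M (\<lambda>_. borel) eps {1..T}"
    and K_meas: "K \<in> borel_measurable borel"
    and H_meas: "H \<in> borel_measurable borel"
    and a_adapted: "\<And>t. t < T \<Longrightarrow> a t \<in> borel_measurable (F t)"
    and XR_sub: "XR \<subseteq> \<X>"
    and XR_bdd: "bounded XR"
    and XR_compact: "compact (closure XR)"
    and XR_sconv: "strictly_convex_set (closure XR)"
    and X_val: "\<And>t \<omega>. t \<le> T \<Longrightarrow> \<omega> \<in> space M \<Longrightarrow> X t \<omega> \<in> \<X>"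
    and X0: "\<And>\<omega>. \<omega> \<in> space M \<Longrightarrow> X 0 \<omega> \<in> interior XR"
    and dyn: "\<And>t \<omega>. t < T \<Longrightarrow> \<omega> \<in> space M \<Longrightarrow> X (Suc t) \<omega> = H (K (X t \<omega>, a t \<omega>), eps (Suc t) \<omega>)"
  shows "\<forall>t<T. \<forall>\<omega>\<in>space M.
           XRproc T XR X (Suc t) \<omega> =
             indicator (frontier XR) (XRproc T XR X t \<omega>) *\<^sub>R XRproc T XR X t \<omega>
           + indicator (interior XR) (XRproc T XR X t \<omega>) *\<^sub>R
               Htilde XR H (K (XRproc T XR X t \<omega>, a t \<omega>)) (eps (Suc t) \<omega>)"
proof (intro allI impI ballI)
  fix t \<omega> assume tT: "t < T" and w: "\<omega> \<in> space M"
  have cvx: "convex (closure XR)" using XR_sconv by (simp add: strictly_convex_set_def)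
  have ine: "interior XR \<noteq> {}" using X0[OF w] by blast
  have fi: "frontier XR \<inter> interior XR = {}" by (auto simp: frontier_def)
  let ?R = "XRproc T XR X"
  let ?tau = "tauR T XR X \<omega>"
  show "?R (Suc t) \<omega> =
             indicator (frontier XR) (?R t \<omega>) *\<^sub>R ?R t \<omega>
           + indicator (interior XR) (?R t \<omega>) *\<^sub>R
               Htilde XR H (K (?R t \<omega>, a t \<omega>)) (eps (Suc t) \<omega>)"
  proof (cases "\<exists>s\<le>T. X s \<omega> \<notin> interior XR")
    case False
    then have tau: "?tau = \<infinity>" by (simp add: tauR_def)
    have R: "?R s \<omega> = X s \<omega>" for s
      by (simp add: XRproc_def tau indicator_def)
    have i1: "X t \<omega> \<in> interior XR" "X (Suc t) \<omega> \<in> interior XR" using False tT by auto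
    then show ?thesis using R[of t] R[of "Suc t"] dyn[OF tT w] fi
      by (auto simp: Htilde_def indicator_def)
  next
    case True
    define m where "m = (LEAST s. s \<le> T \<and> X s \<omega> \<notin> interior XR)"
    have tau: "?tau = enat m" using True by (simp add: tauR_def m_def)
    have mP: "m \<le> T \<and> X m \<omega> \<notin> interior XR"
      using True unfolding m_def by (metis (mono_tags, lifting) LeastI)
    have mmin: "s < m \<Longrightarrow> X s \<omega> \<in> interior XR" for s
      using not_less_Least[of s "\<lambda>s. s \<le> T \<and> X s \<omega> \<notin> interior XR"] mP
      unfolding m_def[symmetric] by auto
    have m0: "m > 0" using mP X0[OF w] by (cases m) auto
    have R: "?R s \<omega> = (if m > s then X s \<omega> else proj XR (X m \<omega>))" for s
    proof (cases "s = 0")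
      case True then show ?thesis using m0 by (simp add: XRproc_def)
    next
      case False
      then show ?thesis by (auto simp: XRproc_def tau indicator_def min_def)
    qed
    have pf: "proj XR (X m \<omega>) \<in> frontier XR"
      using proj_frontier[OF cvx ine] mP by blast
    consider "m > Suc t" | "m = Suc t" | "m \<le> t" by linarith
    then show ?thesis
    proof cases
      case 1
      have i1: "X t \<omega> \<in> interior XR" "X (Suc t) \<omega> \<in> interior XR" using mmin 1 by auto
      then show ?thesis using R[of t] R[of "Suc t"] 1 dyn[OF tT w] fi
        by (auto simp: Htilde_def indicator_def)
    next
      case 2
      have i1: "X t \<omega> \<in> interior XR" using mmin 2 by auto
      then show ?thesis using R[of t] R[of "Suc t"] 2 dyn[OF tT w] fi mP
        by (auto simp: Htilde_def indicator_def)
    next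
      case 3
      then show ?thesis using R[of t] R[of "Suc t"] pf fi
        by (auto simp: indicator_def)
    qed
  qed
qed

end
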